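(* Let $a,b\in\alpha$ and let $w_{a,b}$ be the nanoword $(\{A,B\},ABAB)$ with $|A|=a$, $|B|=b$. The group of homotopy automorphisms of $w_{a,b}$ is the full group of $\tau$-equivariant bijections $\alpha\to\alpha$ if $a=\tau(b)$, and is the subgroup of $\tau$-equivariant bijections $f$ with $f(a)=a$ and $f(b)=b$ if $a\neq\tau(b)$.
   Context: Fix a set $\alpha$ with an involution $\tau$. An $\alpha$-alphabet is a set $\mathcal A$ with a map $p:\mathcal A\to\alpha$, $A\mapsto|A|$. A nanoword over $\alpha$ is a pair $(\mathcal A,w)$ with $\mathcal A$ a finite $\alpha$-alphabet and $w$ a word in which each letter occurs exactly twice. Isomorphism: bijection of alphabets preserving $|\cdot|$ carrying one word to the other letterwise. Homotopy moves ($x,y,z,t$ words in the remaining letters): (1) $(\mathcal A,xAAy)\mapsto(\mathcal A\setminus\{A\},xy)$; (2) $(\mathcal A,xAByBAz)\mapsto(\mathcal A\setminus\{A,B\},xyz)$ if $|B|=\tau(|A|)$; (3) $(\mathcal A,xAByACzBCt)\mapsto(\mathcal A,xBAyCAzCBt)$ if $A,B,C$ distinct with $|A|=|B|=|C|$. Homotopy ($\simeq$) is generated by isomorphisms, these moves and inverses. For a bijection $f:\alpha\to\alpha$ and a nanoword $(\mathcal A,p,w)$, let $f_\#(w)=(\mathcal A,f\circ p,w)$. A homotopy automorphism of $w$ is a $\tau$-equivariant bijection $f:\alpha\to\alpha$ (i.e. $f\tau=\tau f$) such that $f_\#(w)\simeq w$; these form a group under composition. *)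

theory Defs
  imports Main
begin

text \<open>Nanowords over alpha = UNIV :: 'a set. Letters are drawn from nat (an infinite
supply); the alphabet of a nanoword (w, p) is set w, and p gives the projection |.|
(only its values on set w matter).\<close>

type_synonym 'a nanoword = "nat list \<times> (nat \<Rightarrow> 'a)"

definition is_nanoword :: "'a nanoword \<Rightarrow> bool" where
  "is_nanoword u \<longleftrightarrow> (\<forall>x\<in>set (fst u). count_list (fst u) x = 2)"

definition nw_iso :: "'a nanoword \<Rightarrow> 'a nanoword \<Rightarrow> bool" where
  "nw_iso u v \<longleftrightarrow> (\<exists>g. inj_on g (set (fst u)) \<and> map g (fst u) = fst v \<and>
      (\<forall>x\<in>set (fst u). snd v (g x) = snd u x))"

definition move1 :: "'a nanoword \<Rightarrow> 'a nanoword \<Rightarrow> bool" where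
  "move1 u v \<longleftrightarrow> snd v = snd u \<and>
     (\<exists>x y A. fst u = x @ [A, A] @ y \<and> fst v = x @ y)"

definition move2 :: "('a \<Rightarrow> 'a) \<Rightarrow> 'a nanoword \<Rightarrow> 'a nanoword \<Rightarrow> bool" where
  "move2 \<tau> u v \<longleftrightarrow> snd v = snd u \<and>
     (\<exists>x y z A B. A \<noteq> B \<and> snd u B = \<tau> (snd u A) \<and>
        fst u = x @ [A, B] @ y @ [B, A] @ z \<and> fst v = x @ y @ z)"

definition move3 :: "'a nanoword \<Rightarrow> 'a nanoword \<Rightarrow> bool" where
  "move3 u v \<longleftrightarrow> snd v = snd u \<and>
     (\<exists>x y z t A B C. A \<noteq> B \<and> A \<noteq> C \<and> B \<noteq> C \<and>
        snd u A = snd u B \<and> snd u B = snd u C \<and>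
        fst u = x @ [A, B] @ y @ [A, C] @ z @ [B, C] @ t \<and>
        fst v = x @ [B, A] @ y @ [C, A] @ z @ [C, B] @ t)"

definition nw_step :: "('a \<Rightarrow> 'a) \<Rightarrow> 'a nanoword \<Rightarrow> 'a nanoword \<Rightarrow> bool" where
  "nw_step \<tau> u v \<longleftrightarrow> is_nanoword u \<and> is_nanoword v \<and>
     (nw_iso u v \<or> move1 u v \<or> move2 \<tau> u v \<or> move3 u v)"

definition homotopic :: "('a \<Rightarrow> 'a) \<Rightarrow> 'a nanoword \<Rightarrow> 'a nanoword \<Rightarrow> bool" where
  "homotopic \<tau> = (\<lambda>u v. nw_step \<tau> u v \<or> nw_step \<tau> v u)\<^sup>*\<^sup>*"

definition push_nw :: "('a \<Rightarrow> 'a) \<Rightarrow> 'a nanoword \<Rightarrow> 'a nanoword" where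
  "push_nw f u = (fst u, f \<circ> snd u)"

definition tau_equivariant_bij :: "('a \<Rightarrow> 'a) \<Rightarrow> ('a \<Rightarrow> 'a) \<Rightarrow> bool" where
  "tau_equivariant_bij \<tau> f \<longleftrightarrow> bij f \<and> f \<circ> \<tau> = \<tau> \<circ> f"

definition homotopy_automorphisms :: "('a \<Rightarrow> 'a) \<Rightarrow> 'a nanoword \<Rightarrow> ('a \<Rightarrow> 'a) set" where
  "homotopy_automorphisms \<tau> u =
     {f. tau_equivariant_bij \<tau> f \<and> homotopic \<tau> (push_nw f u) u}"

definition w_ab :: "'a \<Rightarrow> 'a \<Rightarrow> 'a nanoword" where
  "w_ab a b = ([0, 1, 0, 1], (\<lambda>x. if x = 0 then a else b))"

end

theory Submission
  imports Defs
begin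

definition sg :: "nat list \<Rightarrow> nat \<Rightarrow> nat \<Rightarrow> int" where
  "sg l X Y = (if X \<noteq> Y \<and> l = [X,Y,X,Y] then 1
      else if X \<noteq> Y \<and> l = [Y,X,Y,X] then -1 else 0)"

definition lk :: "nat list \<Rightarrow> nat \<Rightarrow> nat \<Rightarrow> int" where
  "lk w X Y = sg (filter (\<lambda>z. z = X \<or> z = Y) w) X Y"

lemma map_eq4: "inj_on g (set l \<union> {X, Y}) \<Longrightarrow> (map g l = [g X, g Y, g X, g Y]) = (l = [X,Y,X,Y])"
proof
  assume i: "inj_on g (set l \<union> {X, Y})" and m: "map g l = [g X, g Y, g X, g Y]"
  then obtain p q r s where l: "l = [p,q,r,s]" by (auto simp: map_eq_Cons_conv)
  have e: "\<And>u v. u \<in> set l \<union> {X,Y} \<Longrightarrow> v \<in> set l \<union> {X,Y} \<Longrightarrow> (g u = g v) = (u = v)"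
    using inj_on_eq_iff[OF i] by blast
  have "g p = g X" "g q = g Y" "g r = g X" "g s = g Y" using m l by simp_all
  then have "p = X" "q = Y" "r = X" "s = Y" using e[of p X] e[of q Y] e[of r X] e[of s Y] l by auto
  then show "l = [X,Y,X,Y]" using l by simp
qed simp

lemma sg_map:
  assumes "inj_on g (set l \<union> {X, Y})"
  shows "sg (map g l) (g X) (g Y) = sg l X Y"
proof -
  have i2: "inj_on g (set l \<union> {Y, X})" using assms by (simp add: insert_commute)
  have "(g X = g Y) = (X = Y)" using inj_on_eq_iff[OF assms, of X Y] by blast
  then show ?thesis unfolding sg_def using map_eq4[OF assms] map_eq4[OF i2] by simp
qed

lemma filter_map_inj:
  assumes "inj_on g (set w \<union> {X, Y})"
  shows "filter (\<lambda>z. z = g X \<or> z = g Y) (map g w) = map g (filter (\<lambda>z. z = X \<or> z = Y) w)"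
  using assms
proof (induction w)
  case Nil then show ?case by simp
next
  case (Cons a w)
  have i: "inj_on g (set w \<union> {X, Y})" using Cons.prems by (auto intro: inj_on_subset)
  have e: "\<And>u v. u \<in> set (a#w) \<union> {X,Y} \<Longrightarrow> v \<in> set (a#w) \<union> {X,Y} \<Longrightarrow> (g u = g v) = (u = v)"
    using inj_on_eq_iff[OF Cons.prems] by blast
  have "(g a = g X \<or> g a = g Y) = (a = X \<or> a = Y)"
    using e[of a X] e[of a Y] by auto
  then show ?case using Cons.IH[OF i] by simp
qed

lemma lk_map:
  assumes "inj_on g (set w \<union> {X, Y})"
  shows "lk (map g w) (g X) (g Y) = lk w X Y"
proof -
  have "set (filter (\<lambda>z. z = X \<or> z = Y) w) \<union> {X, Y} \<subseteq> set w \<union> {X, Y}" by auto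
  then have "inj_on g (set (filter (\<lambda>z. z = X \<or> z = Y) w) \<union> {X, Y})"
    using assms inj_on_subset by blast
  then show ?thesis unfolding lk_def filter_map_inj[OF assms] by (rule sg_map)
qed

lemma lk_same[simp]: "lk w X X = 0"
  unfolding lk_def sg_def by simp


definition del :: "'a \<Rightarrow> 'a \<Rightarrow> int" where "del x y = (if x = y then 1 else 0)"

definition S :: "(int \<Rightarrow> int) \<Rightarrow> nat list \<Rightarrow> (nat \<Rightarrow> 'a) \<Rightarrow> nat \<Rightarrow> 'a \<Rightarrow> int" where
  "S h w p X y = (\<Sum>Y\<in>set w. if p Y = y then h (lk w X Y) else 0)"

definition pos :: "int \<Rightarrow> int" where "pos v = (if v = 1 then 1 else 0)"

definition NN :: "(('a \<Rightarrow> int) \<Rightarrow> ('a \<Rightarrow> int) \<Rightarrow> bool) \<Rightarrow> nat list \<Rightarrow> (nat \<Rightarrow> 'a) \<Rightarrow> 'a \<Rightarrow> int" where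
  "NN Q w p t = (\<Sum>X\<in>set w. if p X = t \<and> Q (S id w p X) (S pos w p X) then 1 else 0)"

definition Inv :: "('a \<Rightarrow> 'a) \<Rightarrow> (('a \<Rightarrow> int) \<Rightarrow> ('a \<Rightarrow> int) \<Rightarrow> bool) \<Rightarrow> 'a \<Rightarrow> 'a nanoword \<Rightarrow> int" where
  "Inv \<tau> Q t u = (if \<tau> t = t then NN Q (fst u) (snd u) t mod 2
      else NN Q (fst u) (snd u) t - NN Q (fst u) (snd u) (\<tau> t))"

definition goodQ :: "('a \<Rightarrow> 'a) \<Rightarrow> 'a \<Rightarrow> (('a \<Rightarrow> int) \<Rightarrow> ('a \<Rightarrow> int) \<Rightarrow> bool) \<Rightarrow> bool" where
  "goodQ \<tau> t Q \<longleftrightarrow> \<not> Q (\<lambda>_. 0) (\<lambda>_. 0) \<and>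
     (\<forall>L K \<alpha> k j. Q (\<lambda>y. L y + k * (del \<alpha> y + del (\<tau> \<alpha>) y)) (\<lambda>y. K y + j * (del \<alpha> y + del (\<tau> \<alpha>) y)) = Q L K) \<and>
     (\<forall>L K K'. (\<forall>y. y \<noteq> t \<and> y \<noteq> \<tau> t \<longrightarrow> K y = K' y) \<longrightarrow> Q L K = Q L K')"

lemma iso_NN:
  assumes "nw_iso u v"
  shows "NN Q (fst v) (snd v) t = NN Q (fst u) (snd u) t"
proof -
  obtain g where i: "inj_on g (set (fst u))" and m: "map g (fst u) = fst v"
    and q: "\<forall>x\<in>set (fst u). snd v (g x) = snd u x" using assms nw_iso_def by blast
  define w where "w = fst u"
  have sv: "set (fst v) = g ` set w" unfolding w_def m[symmetric] by simp
  have lkv: "lk (fst v) (g X) (g Y) = lk w X Y" if "X \<in> set w" "Y \<in> set w" for X Y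
  proof -
    have "set w \<union> {X, Y} = set w" using that by auto
    then show ?thesis using lk_map[of g w X Y] i m w_def by simp
  qed
  have Sv: "S h (fst v) (snd v) (g X) = S h w (snd u) X" if "X \<in> set w" for h X
  proof
    fix y
    have "S h (fst v) (snd v) (g X) y = (\<Sum>Y\<in>set w. if snd v (g Y) = y then h (lk (fst v) (g X) (g Y)) else 0)"
      unfolding S_def sv using i w_def by (simp add: sum.reindex)
    also have "\<dots> = S h w (snd u) X y" unfolding S_def
      using q lkv that w_def by (intro sum.cong) auto
    finally show "S h (fst v) (snd v) (g X) y = S h w (snd u) X y" .
  qed
  have "NN Q (fst v) (snd v) t = (\<Sum>X\<in>set w. if snd v (g X) = t \<and> Q (S id (fst v) (snd v) (g X)) (S pos (fst v) (snd v) (g X)) then 1 else 0)"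
    unfolding NN_def sv using i w_def by (simp add: sum.reindex)
  also have "\<dots> = NN Q (fst u) (snd u) t" unfolding NN_def
    using q Sv w_def by (intro sum.cong) auto
  finally show ?thesis .
qed

lemma adj_not4: "X \<noteq> Y \<Longrightarrow> l1 @ A # A # l2 \<noteq> [X, Y, X, Y]"
  by (cases l1; cases "tl l1"; cases "tl (tl l1)"; auto)

lemma sg_adj: "sg (l1 @ A # A # l2) X Y = 0"
  unfolding sg_def using adj_not4[of X Y l1 A l2] adj_not4[of Y X l1 A l2] by auto

lemma filter_out: "A \<notin> set x \<Longrightarrow> filter (\<lambda>z. z = X \<or> z = A) x = filter (\<lambda>z. z = X) x"
  by (induction x) auto

lemma filter_out2: "A \<notin> set x \<Longrightarrow> filter (\<lambda>z. z = A \<or> z = X) x = filter (\<lambda>z. z = X) x"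
  by (induction x) auto

lemma move1_facts:
  assumes "is_nanoword (x @ [A, A] @ y, p)"
  shows "A \<notin> set x" "A \<notin> set y"
proof -
  have "count_list (x @ [A, A] @ y) A = 2" using assms unfolding is_nanoword_def by simp
  then have "count_list x A = 0" "count_list y A = 0" by simp_all
  then show "A \<notin> set x" "A \<notin> set y" by (simp_all add: count_list_0_iff)
qed

lemma move1_NN:
  assumes "is_nanoword (x @ [A, A] @ y, p)" and nq: "\<not> Q (\<lambda>_. 0) (\<lambda>_. 0)"
  shows "NN Q (x @ [A, A] @ y) p t = NN Q (x @ y) p t"
proof -
  note f = move1_facts[OF assms(1)]
  define u where "u = x @ [A, A] @ y"
  define v where "v = x @ y"
  have su: "set u = insert A (set v)" and nv: "A \<notin> set v" using f u_def v_def by auto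
  have lk1: "lk u X A = 0" for X
    unfolding lk_def u_def using f by (simp add: filter_out sg_adj)
  have lk2: "lk u A Y = 0" for Y
    unfolding lk_def u_def using f by (simp add: filter_out2 sg_adj)
  have lk3: "lk u X Y = lk v X Y" if "X \<noteq> A" "Y \<noteq> A" for X Y
    unfolding lk_def u_def v_def using that by simp
  have SA: "S h u p A = (\<lambda>_. 0)" if "h 0 = 0" for h
    unfolding S_def using lk2 that by (intro ext sum.neutral) auto
  have SX: "S h u p X = S h v p X" if "h 0 = 0" "X \<in> set v" for h X
  proof
    fix y
    have XA: "X \<noteq> A" using that nv by auto
    have "\<And>Y. Y \<in> set v \<Longrightarrow> lk u X Y = lk v X Y" using lk3[OF XA] nv by metis
    then show "S h u p X y = S h v p X y"
      unfolding S_def su using nv that lk1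
      by (simp add: sum.insert, intro sum.cong) auto
  qed
  have "NN Q u p t = (\<Sum>X\<in>set v. if p X = t \<and> Q (S id u p X) (S pos u p X) then 1 else 0)"
    unfolding NN_def su using nv SA[of id] SA[of pos] nq by (simp add: pos_def)
  also have "\<dots> = NN Q v p t" unfolding NN_def
    using SX[of id] SX[of pos] by (intro sum.cong) (auto simp: pos_def)
  finally show ?thesis using u_def v_def by simp
qed


lemma filter_none: "A \<notin> set x \<Longrightarrow> B \<notin> set x \<Longrightarrow> filter (\<lambda>z. z = A \<or> z = B) x = []"
  by (induction x) auto

lemma move2_facts:
  assumes "is_nanoword (x @ [A, B] @ y @ [B, A] @ z, p)" "A \<noteq> B"
  shows "A \<notin> set x" "A \<notin> set y" "A \<notin> set z" "B \<notin> set x" "B \<notin> set y" "B \<notin> set z"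
proof -
  have "count_list (x @ [A, B] @ y @ [B, A] @ z) A = 2" "count_list (x @ [A, B] @ y @ [B, A] @ z) B = 2"
    using assms unfolding is_nanoword_def by simp_all
  then have "count_list x A = 0" "count_list y A = 0" "count_list z A = 0"
     "count_list x B = 0" "count_list y B = 0" "count_list z B = 0" using assms(2) by simp_all
  then show "A \<notin> set x" "A \<notin> set y" "A \<notin> set z" "B \<notin> set x" "B \<notin> set y" "B \<notin> set z"
    by (simp_all add: count_list_0_iff)
qed

lemma move2_NN:
  assumes nw: "is_nanoword (x @ [A, B] @ y @ [B, A] @ z, p)" and AB: "A \<noteq> B"
    and pB: "p B = \<tau> (p A)"
    and gq: "\<forall>L K \<alpha> k j. Q (\<lambda>y. L y + k * (del \<alpha> y + del (\<tau> \<alpha>) y)) (\<lambda>y. K y + j * (del \<alpha> y + del (\<tau> \<alpha>) y)) = Q L K"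
  shows "NN Q (x @ [A, B] @ y @ [B, A] @ z) p t = NN Q (x @ y @ z) p t
     + (if p A = t \<and> Q (S id (x @ [A, B] @ y @ [B, A] @ z) p A) (S pos (x @ [A, B] @ y @ [B, A] @ z) p A) then 1 else 0)
     + (if \<tau> (p A) = t \<and> Q (S id (x @ [A, B] @ y @ [B, A] @ z) p A) (S pos (x @ [A, B] @ y @ [B, A] @ z) p A) then 1 else 0)"
proof -
  note f = move2_facts[OF nw AB]
  define u where "u = x @ [A, B] @ y @ [B, A] @ z"
  define v where "v = x @ y @ z"
  define g where "g = (\<lambda>z. if z = A then B else if z = B then A else z)"
  have ig: "inj g" unfolding g_def inj_def by auto
  have mx: "map g x = x" "map g y = y" "map g z = z" using f unfolding g_def
    by (auto intro!: map_idI)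
  have mu: "map g u = x @ [B, A] @ y @ [A, B] @ z" unfolding u_def using mx by (simp add: g_def)
  have su: "set u = insert A (insert B (set v))" and nv: "A \<notin> set v" "B \<notin> set v"
    using f u_def v_def by auto
  have lk3: "lk u X Y = lk v X Y" if "X \<noteq> A" "Y \<noteq> A" "X \<noteq> B" "Y \<noteq> B" for X Y
    unfolding lk_def u_def v_def using that by simp
  have lkX: "lk u X A = lk u X B" if "X \<noteq> A" "X \<noteq> B" for X
  proof -
    have "lk (map g u) (g X) (g A) = lk u X A" by (rule lk_map, rule inj_on_subset[OF ig]) simp
    then have "lk (x @ [B, A] @ y @ [A, B] @ z) X B = lk u X A" using mu that by (simp add: g_def)
    moreover have "lk (x @ [B, A] @ y @ [A, B] @ z) X B = lk u X B"
      unfolding lk_def u_def using that AB by simp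
    ultimately show ?thesis by simp
  qed
  have lkA: "lk u A Y = lk u B Y" for Y
  proof (cases "Y = A \<or> Y = B")
    case True
    have e1: "filter (\<lambda>z. z = A \<or> z = B) u = [A, B, B, A]" unfolding u_def using f AB
      by (simp add: filter_none)
    have e2: "filter (\<lambda>z. z = B \<or> z = A) u = [A, B, B, A]" unfolding u_def using f AB
      by (simp add: filter_none[of B x A] filter_none[of B y A] filter_none[of B z A])
    show ?thesis using True e1 e2 AB unfolding lk_def sg_def by auto
  next
    case False
    have "lk (map g u) (g A) (g Y) = lk u A Y" by (rule lk_map, rule inj_on_subset[OF ig]) simp
    then have "lk (x @ [B, A] @ y @ [A, B] @ z) B Y = lk u A Y" using mu False by (simp add: g_def)
    moreover have "lk (x @ [B, A] @ y @ [A, B] @ z) B Y = lk u B Y"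
      unfolding lk_def u_def using False AB by simp
    ultimately show ?thesis by simp
  qed
  have SAB: "S h u p B = S h u p A" for h
  proof
    fix y show "S h u p B y = S h u p A y" unfolding S_def by (intro sum.cong refl) (simp add: lkA[symmetric])
  qed
  have SX: "S h u p X = (\<lambda>y. S h v p X y + h (lk u X A) * (del (p A) y + del (\<tau> (p A)) y))"
    if "h 0 = 0" "X \<in> set v" for h X
  proof
    fix y
    have XA: "X \<noteq> A" "X \<noteq> B" using that nv by auto
    have "\<And>Y. Y \<in> set v \<Longrightarrow> lk u X Y = lk v X Y" using lk3[OF XA(1) _ XA(2)] nv by metis
    then have "S h u p X y = (if p A = y then h (lk u X A) else 0) + (if p B = y then h (lk u X B) else 0)
        + S h v p X y"
      unfolding S_def su using nv AB by (simp add: sum.insert, intro sum.cong) auto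
    then show "S h u p X y = S h v p X y + h (lk u X A) * (del (p A) y + del (\<tau> (p A)) y)"
      using lkX[OF XA] pB by (simp add: del_def algebra_simps)
  qed
  have QX: "Q (S id u p X) (S pos u p X) = Q (S id v p X) (S pos v p X)" if "X \<in> set v" for X
    using SX[of id X] SX[of pos X] that gq by (simp add: pos_def)
  have "NN Q u p t = (if p A = t \<and> Q (S id u p A) (S pos u p A) then 1 else 0)
     + (if p B = t \<and> Q (S id u p B) (S pos u p B) then 1 else 0)
     + (\<Sum>X\<in>set v. if p X = t \<and> Q (S id u p X) (S pos u p X) then 1 else 0)"
    unfolding NN_def su using nv AB by (simp add: sum.insert)
  also have "(\<Sum>X\<in>set v. if p X = t \<and> Q (S id u p X) (S pos u p X) then 1 else 0) = NN Q v p t"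
    unfolding NN_def using QX by (intro sum.cong) auto
  finally show ?thesis unfolding u_def[symmetric] v_def[symmetric] SAB pB by linarith
qed


lemma sum_two_change:
  assumes "finite T" "B \<in> T" "C \<in> T" "B \<noteq> C"
    "\<And>E. E \<in> T \<Longrightarrow> E \<noteq> B \<Longrightarrow> E \<noteq> C \<Longrightarrow> f E = g E"
    "f B + f C = (g B + g C :: int)"
  shows "sum f T = sum g T"
proof -
  have c: "C \<in> T - {B}" using assms by auto
  have "sum f T = f B + (f C + sum f (T - {B} - {C}))"
    using sum.remove[OF assms(1,2), of f] sum.remove[OF _ c, of f] assms(1) by simp
  moreover have "sum g T = g B + (g C + sum g (T - {B} - {C}))"
    using sum.remove[OF assms(1,2), of g] sum.remove[OF _ c, of g] assms(1) by simp
  moreover have "sum f (T - {B} - {C}) = sum g (T - {B} - {C})"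
    using assms(5) by (intro sum.cong) auto
  ultimately show ?thesis using assms(6) by simp
qed

lemma move3_facts:
  assumes "is_nanoword (x @ [A, B] @ y @ [A, C] @ z @ [B, C] @ t, p)" "A \<noteq> B" "A \<noteq> C" "B \<noteq> C"
  shows "A \<notin> set x" "A \<notin> set y" "A \<notin> set z" "A \<notin> set t"
    "B \<notin> set x" "B \<notin> set y" "B \<notin> set z" "B \<notin> set t"
    "C \<notin> set x" "C \<notin> set y" "C \<notin> set z" "C \<notin> set t"
proof -
  let ?u = "x @ [A, B] @ y @ [A, C] @ z @ [B, C] @ t"
  have "count_list ?u A = 2" "count_list ?u B = 2" "count_list ?u C = 2"
    using assms unfolding is_nanoword_def by simp_all
  then have "count_list x A = 0" "count_list y A = 0" "count_list z A = 0" "count_list t A = 0"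
     "count_list x B = 0" "count_list y B = 0" "count_list z B = 0" "count_list t B = 0"
     "count_list x C = 0" "count_list y C = 0" "count_list z C = 0" "count_list t C = 0"
    using assms(2-4) by simp_all
  then show "A \<notin> set x" "A \<notin> set y" "A \<notin> set z" "A \<notin> set t"
    "B \<notin> set x" "B \<notin> set y" "B \<notin> set z" "B \<notin> set t"
    "C \<notin> set x" "C \<notin> set y" "C \<notin> set z" "C \<notin> set t"
    by (simp_all add: count_list_0_iff)
qed

lemma move3_NN:
  assumes nw: "is_nanoword (x @ [A, B] @ y @ [A, C] @ z @ [B, C] @ t0, p)"
    and d: "A \<noteq> B" "A \<noteq> C" "B \<noteq> C" and pp: "p A = p B" "p B = p C"
    and gq: "\<forall>L K K'. (\<forall>y. y \<noteq> t \<and> y \<noteq> t' \<longrightarrow> K y = K' y) \<longrightarrow> Q L K = Q L K'"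
    and tt: "s = t \<or> s = t'"
  shows "NN Q (x @ [A, B] @ y @ [A, C] @ z @ [B, C] @ t0) p s
       = NN Q (x @ [B, A] @ y @ [C, A] @ z @ [C, B] @ t0) p s"
proof -
  note f = move3_facts[OF nw d]
  define u where "u = x @ [A, B] @ y @ [A, C] @ z @ [B, C] @ t0"
  define v where "v = x @ [B, A] @ y @ [C, A] @ z @ [C, B] @ t0"
  have su: "set u = set v" unfolding u_def v_def by auto
  have lkeq: "lk u D E = lk v D E" if "D \<notin> {A, B, C} \<or> E \<notin> {A, B, C}" for D E
    using that d unfolding lk_def u_def v_def by auto
  have lkeq2: "lk u D E = lk v D E" if "D = E \<or> D \<notin> {A, B, C} \<or> E \<notin> {A, B, C}" for D E
    using that lkeq by (cases "D = E") auto
  have fAB: "filter (\<lambda>z. z = A \<or> z = B) u = [A, B, A, B]" "filter (\<lambda>z. z = A \<or> z = B) v = [B, A, A, B]"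
    "filter (\<lambda>z. z = B \<or> z = A) u = [A, B, A, B]" "filter (\<lambda>z. z = B \<or> z = A) v = [B, A, A, B]"
    unfolding u_def v_def using f d
    by (simp_all add: filter_none[of A _ B] filter_none[of B _ A])
  have fAC: "filter (\<lambda>z. z = A \<or> z = C) u = [A, A, C, C]" "filter (\<lambda>z. z = A \<or> z = C) v = [A, C, A, C]"
    "filter (\<lambda>z. z = C \<or> z = A) u = [A, A, C, C]" "filter (\<lambda>z. z = C \<or> z = A) v = [A, C, A, C]"
    unfolding u_def v_def using f d
    by (simp_all add: filter_none[of A _ C] filter_none[of C _ A])
  have fBC: "filter (\<lambda>z. z = B \<or> z = C) u = [B, C, B, C]" "filter (\<lambda>z. z = B \<or> z = C) v = [B, C, C, B]"
    "filter (\<lambda>z. z = C \<or> z = B) u = [B, C, B, C]" "filter (\<lambda>z. z = C \<or> z = B) v = [B, C, C, B]"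
    unfolding u_def v_def using f d
    by (simp_all add: filter_none[of B _ C] filter_none[of C _ B])
  have vals: "lk u A B = 1" "lk v A B = 0" "lk u A C = 0" "lk v A C = 1"
    "lk u B A = -1" "lk v B A = 0" "lk u B C = 1" "lk v B C = 0"
    "lk u C A = 0" "lk v C A = -1" "lk u C B = -1" "lk v C B = 0"
    unfolding lk_def fAB fAC fBC sg_def using d by auto
  have Bu: "A \<in> set u" "B \<in> set u" "C \<in> set u" unfolding u_def by auto
  have SX: "S h u p X y = S h v p X y" if "h 0 = 0" "y \<noteq> p X \<or> h (-1) + h 1 = 0" for h X y
  proof -
    consider "X \<notin> {A, B, C}" | "X = A" | "X = B" | "X = C" by blast
    then show ?thesis
    proof cases
      case 1
      then show ?thesis unfolding S_def su using lkeq by (intro sum.cong) auto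
    next
      case 2
      have e: "lk u A E = lk v A E" if "E \<noteq> B" "E \<noteq> C" for E
        using lkeq2[of A E] that d by (cases "E = A") auto
      show ?thesis unfolding S_def su
        by (rule sum_two_change[of _ B C]) (use Bu su d 2 e vals pp that in auto)
    next
      case 3
      have e: "lk u B E = lk v B E" if "E \<noteq> A" "E \<noteq> C" for E
        using lkeq2[of B E] that d by (cases "E = B") auto
      show ?thesis unfolding S_def su
        by (rule sum_two_change[of _ A C]) (use Bu su d 3 e vals pp that in auto)
    next
      case 4
      have e: "lk u C E = lk v C E" if "E \<noteq> A" "E \<noteq> B" for E
        using lkeq2[of C E] that d by (cases "E = C") auto
      show ?thesis unfolding S_def su
        by (rule sum_two_change[of _ A B]) (use Bu su d 4 e vals pp that in auto)
    qed
  qed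
  have QX: "Q (S id u p X) (S pos u p X) = Q (S id v p X) (S pos v p X)" if "p X = s" for X
  proof -
    have "S id u p X = S id v p X" using SX[of id] by (intro ext) auto
    moreover have "\<forall>y. y \<noteq> t \<and> y \<noteq> t' \<longrightarrow> S pos u p X y = S pos v p X y"
      using SX[of pos] that tt by (auto simp: pos_def)
    ultimately show ?thesis using gq by metis
  qed
  show ?thesis unfolding u_def[symmetric] v_def[symmetric] NN_def su
    using QX by (intro sum.cong) auto
qed


lemma nanoword_fst: "is_nanoword u \<Longrightarrow> is_nanoword (fst u, p)"
  unfolding is_nanoword_def by simp

lemma step_Inv:
  assumes inv: "\<And>x. \<tau> (\<tau> x) = x" and gq: "goodQ \<tau> t Q" and st: "nw_step \<tau> u v"
  shows "Inv \<tau> Q t u = Inv \<tau> Q t v"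
proof -
  have nu: "is_nanoword u" and mv: "nw_iso u v \<or> move1 u v \<or> move2 \<tau> u v \<or> move3 u v"
    using st unfolding nw_step_def by auto
  have g1: "\<not> Q (\<lambda>_. 0) (\<lambda>_. 0)"
    and g2: "\<forall>L K \<alpha> k j. Q (\<lambda>y. L y + k * (del \<alpha> y + del (\<tau> \<alpha>) y)) (\<lambda>y. K y + j * (del \<alpha> y + del (\<tau> \<alpha>) y)) = Q L K"
    and g3: "\<forall>L K K'. (\<forall>y. y \<noteq> t \<and> y \<noteq> \<tau> t \<longrightarrow> K y = K' y) \<longrightarrow> Q L K = Q L K'"
    using gq unfolding goodQ_def by blast+
  have sameNN: "Inv \<tau> Q t u = Inv \<tau> Q t v" if "\<And>s. NN Q (fst u) (snd u) s = NN Q (fst v) (snd v) s"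
    unfolding Inv_def using that by simp
  from mv consider "nw_iso u v" | "move1 u v" | "move2 \<tau> u v" | "move3 u v" by blast
  then show ?thesis
  proof cases
    case 1
    then show ?thesis using iso_NN by (metis sameNN)
  next
    case 2
    then obtain x y A where e: "snd v = snd u" "fst u = x @ [A, A] @ y" "fst v = x @ y"
      unfolding move1_def by blast
    have n: "is_nanoword (x @ [A, A] @ y, snd u)" using nanoword_fst[OF nu] e by simp
    show ?thesis by (rule sameNN) (use move1_NN[where Q=Q, OF n g1] e in simp)
  next
    case 3
    then obtain x y z A B where e: "snd v = snd u" "A \<noteq> B" "snd u B = \<tau> (snd u A)"
        "fst u = x @ [A, B] @ y @ [B, A] @ z" "fst v = x @ y @ z"
      unfolding move2_def by blast
    have n: "is_nanoword (x @ [A, B] @ y @ [B, A] @ z, snd u)" using nanoword_fst[OF nu] e by simp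
    note M = move2_NN[OF n e(2) e(3) g2]
    define c where "c = Q (S id (x @ [A, B] @ y @ [B, A] @ z) (snd u) A) (S pos (x @ [A, B] @ y @ [B, A] @ z) (snd u) A)"
    define \<alpha> where "\<alpha> = snd u A"
    have M1: "NN Q (fst u) (snd u) s = NN Q (fst v) (snd v) s + (if \<alpha> = s \<and> c then 1 else 0) + (if \<tau> \<alpha> = s \<and> c then 1 else 0)" for s
      using M[of s] e unfolding c_def \<alpha>_def by simp
    have e1: "(\<tau> \<alpha> = t) = (\<alpha> = \<tau> t)" and e2: "(\<tau> \<alpha> = \<tau> t) = (\<alpha> = t)" using inv by metis+
    show ?thesis unfolding Inv_def M1 using e1 e2 by auto
  next
    case 4
    then obtain x y z t0 A B C where e: "snd v = snd u" "A \<noteq> B" "A \<noteq> C" "B \<noteq> C"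
        "snd u A = snd u B" "snd u B = snd u C"
        "fst u = x @ [A, B] @ y @ [A, C] @ z @ [B, C] @ t0"
        "fst v = x @ [B, A] @ y @ [C, A] @ z @ [C, B] @ t0"
      unfolding move3_def by blast
    have n: "is_nanoword (x @ [A, B] @ y @ [A, C] @ z @ [B, C] @ t0, snd u)" using nanoword_fst[OF nu] e by simp
    have "NN Q (fst u) (snd u) s = NN Q (fst v) (snd v) s" if "s = t \<or> s = \<tau> t" for s
      using move3_NN[OF n e(2-6) g3 that] e by simp
    then show ?thesis unfolding Inv_def by simp
  qed
qed

lemma homotopic_Inv:
  assumes inv: "\<And>x. \<tau> (\<tau> x) = x" and gq: "goodQ \<tau> t Q" and h: "homotopic \<tau> u v"
  shows "Inv \<tau> Q t u = Inv \<tau> Q t v"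
  using h unfolding homotopic_def
proof (induction rule: rtranclp_induct)
  case base then show ?case by simp
next
  case (step y z)
  then show ?case using step_Inv[OF inv gq] by metis
qed

lemma NN_abab:
  "NN Q [0,1,0,1] q s = (if q 0 = s \<and> Q (del (q 1)) (del (q 1)) then 1 else 0)
     + (if q 1 = s \<and> Q (\<lambda>y. - del (q 0) y) (\<lambda>_. 0) then 1 else 0)"
proof -
  have l: "lk [0,1,0,1] 0 1 = 1" "lk [0,1,0,1] 1 0 = -1" by (simp_all add: lk_def sg_def)
  have s: "set [0::nat,1,0,1] = {0,1}" by auto
  have S0: "S h [0,1,0,1] q 0 = (\<lambda>y. if q 1 = y then h 1 else 0)" if "h 0 = 0" for h
    unfolding S_def s using l that by (auto intro!: ext)
  have S1: "S h [0,1,0,1] q 1 = (\<lambda>y. if q 0 = y then h (-1) else 0)" if "h 0 = 0" for h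
    unfolding S_def s using l that by (auto intro!: ext)
  have a: "S id [0,1,0,1] q 0 = del (q 1)" "S pos [0,1,0,1] q 0 = del (q 1)"
    "S id [0,1,0,1] q 1 = (\<lambda>y. - del (q 0) y)" "S pos [0,1,0,1] q 1 = (\<lambda>_. 0)"
    using S0[of id] S0[of pos] S1[of id] S1[of pos] by (auto simp: pos_def del_def intro!: ext)
  show ?thesis unfolding NN_def s using a by simp
qed


definition clseq :: "('a \<Rightarrow> 'a) \<Rightarrow> ('a \<Rightarrow> int) \<Rightarrow> ('a \<Rightarrow> int) \<Rightarrow> bool" where
  "clseq \<tau> L M \<longleftrightarrow> (\<forall>x. (\<tau> x \<noteq> x \<longrightarrow> L x - L (\<tau> x) = M x - M (\<tau> x)) \<and> (\<tau> x = x \<longrightarrow> even (L x - M x)))"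

lemma clseq_shift:
  assumes inv: "\<And>x. \<tau> (\<tau> x) = x"
  shows "clseq \<tau> (\<lambda>y. L y + k * (del \<alpha> y + del (\<tau> \<alpha>) y)) M = clseq \<tau> L M"
proof -
  have d1: "del \<alpha> (\<tau> x) = del (\<tau> \<alpha>) x" and d2: "del (\<tau> \<alpha>) (\<tau> x) = del \<alpha> x" for x
    unfolding del_def using inv by metis+
  have d3: "del (\<tau> \<alpha>) x = del \<alpha> x" if "\<tau> x = x" for x
    unfolding del_def using inv that by metis
  have "(L x + k * (del \<alpha> x + del (\<tau> \<alpha>) x)) - (L (\<tau> x) + k * (del \<alpha> (\<tau> x) + del (\<tau> \<alpha>) (\<tau> x)))
      = L x - L (\<tau> x)" for x
    using d1 d2 by (simp add: algebra_simps)
  moreover have "even ((L x + k * (del \<alpha> x + del (\<tau> \<alpha>) x)) - M x) = even (L x - M x)" if "\<tau> x = x" for x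
  proof -
    have eq: "(L x + k * (del \<alpha> x + del (\<tau> \<alpha>) x)) - M x = (L x - M x) + 2 * (k * del \<alpha> x)"
      using d3[OF that] by (simp add: algebra_simps)
    have e: "\<And>a c::int. even (a + 2 * c) = even a" by simp
    show ?thesis unfolding eq by (rule e)
  qed
  ultimately show ?thesis unfolding clseq_def by metis
qed

lemma clseq_dd:
  assumes inv: "\<And>x. \<tau> (\<tau> x) = x"
  shows "clseq \<tau> (del x) (del z) = (x = z)"
proof
  assume c: "clseq \<tau> (del x) (del z)"
  show "x = z"
  proof (rule ccontr)
    assume xz: "x \<noteq> z"
    show False
    proof (cases "\<tau> x = x")
      case True
      then have "even (del x x - del z x)" using c unfolding clseq_def by blast
      then show False using xz by (simp add: del_def)
    next
      case False
      then have "del x x - del x (\<tau> x) = del z x - del z (\<tau> x)" using c unfolding clseq_def by blast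
      then show False using xz False by (simp add: del_def split: if_splits)
    qed
  qed
qed (simp add: clseq_def)

lemma clseq_negd:
  assumes inv: "\<And>x. \<tau> (\<tau> x) = x"
  shows "clseq \<tau> (\<lambda>y. - del x y) (del z) = (z = \<tau> x)"
proof
  assume c: "clseq \<tau> (\<lambda>y. - del x y) (del z)"
  show "z = \<tau> x"
  proof (cases "\<tau> x = x")
    case True
    then have "even (- del x x - del z x)" using c unfolding clseq_def by blast
    then have "z = x" by (simp add: del_def split: if_splits)
    then show ?thesis using True by simp
  next
    case False
    have f: "\<tau> (\<tau> x) \<noteq> \<tau> x" using False inv by metis
    then have "- del x (\<tau> x) - (- del x (\<tau> (\<tau> x))) = del z (\<tau> x) - del z (\<tau> (\<tau> x))"
      using c unfolding clseq_def by blast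
    then show ?thesis using False inv by (simp add: del_def split: if_splits)
  qed
next
  assume z: "z = \<tau> x"
  show "clseq \<tau> (\<lambda>y. - del x y) (del z)"
    unfolding clseq_def z del_def using inv by (auto, metis+)
qed

lemma clseq_zero:
  assumes inv: "\<And>x. \<tau> (\<tau> x) = x"
  shows "\<not> clseq \<tau> (\<lambda>_. 0) (del z)"
proof
  assume c: "clseq \<tau> (\<lambda>_. 0) (del z)"
  show False
  proof (cases "\<tau> z = z")
    case True
    have "even (0 - del z z)" using c True unfolding clseq_def by blast
    then show False by (simp add: del_def)
  next
    case False
    then have "0 - 0 = del z z - del z (\<tau> z)" using c unfolding clseq_def by blast
    then show False using False by (simp add: del_def)
  qed
qed

lemma good1:
  assumes inv: "\<And>x. \<tau> (\<tau> x) = x"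
  shows "goodQ \<tau> t (\<lambda>L K. clseq \<tau> L (del m))"
  unfolding goodQ_def using clseq_zero[OF inv] clseq_shift[OF inv] by simp

lemma good3:
  assumes inv: "\<And>x. \<tau> (\<tau> x) = x" and b: "\<tau> b = b" and tb: "t \<noteq> b"
  shows "goodQ \<tau> t (\<lambda>L K. odd (K b))"
proof -
  have tb2: "\<tau> t \<noteq> b" using b tb inv by metis
  have d3: "del (\<tau> \<alpha>) b = del \<alpha> b" for \<alpha>
    unfolding del_def using inv b by metis
  have "odd (K b + j * (del \<alpha> b + del (\<tau> \<alpha>) b)) = odd (K b)" for K j \<alpha>
  proof -
    have eq: "K b + j * (del \<alpha> b + del (\<tau> \<alpha>) b) = K b + 2 * (j * del \<alpha> b)"
      using d3 by (simp add: algebra_simps)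
    have e: "\<And>a c::int. even (a + 2 * c) = even a" by simp
    show ?thesis unfolding eq using e by blast
  qed
  then show ?thesis unfolding goodQ_def using tb tb2 by auto
qed


lemma homotopic_sym: "homotopic \<tau> u v \<Longrightarrow> homotopic \<tau> v u"
  unfolding homotopic_def
proof (induction rule: rtranclp_induct)
  case base then show ?case by simp
next
  case (step y z)
  then have "(\<lambda>u v. nw_step \<tau> u v \<or> nw_step \<tau> v u) z y" by blast
  then show ?case using step.IH by (rule converse_rtranclp_into_rtranclp)
qed

lemma homotopic_trans: "homotopic \<tau> u v \<Longrightarrow> homotopic \<tau> v w \<Longrightarrow> homotopic \<tau> u w"
  unfolding homotopic_def by (rule rtranclp_trans)

lemma hstep: "nw_step \<tau> u v \<Longrightarrow> homotopic \<tau> u v"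
  unfolding homotopic_def by (rule r_into_rtranclp) simp

lemma hstep': "nw_step \<tau> v u \<Longrightarrow> homotopic \<tau> u v"
  unfolding homotopic_def by (rule r_into_rtranclp) simp

lemma move1I: "move1 (x @ [A, A] @ y, p) (x @ y, p)"
  unfolding move1_def by auto

lemma move2I: "A \<noteq> B \<Longrightarrow> p B = \<tau> (p A) \<Longrightarrow> move2 \<tau> (x @ [A, B] @ y @ [B, A] @ z, p) (x @ y @ z, p)"
  unfolding move2_def fst_conv snd_conv
  apply (rule conjI, rule refl)
  apply (rule exI[of _ x], rule exI[of _ y], rule exI[of _ z], rule exI[of _ A], rule exI[of _ B])
  by simp

lemma move3I: "A \<noteq> B \<Longrightarrow> A \<noteq> C \<Longrightarrow> B \<noteq> C \<Longrightarrow> p A = p B \<Longrightarrow> p B = p C \<Longrightarrow>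
  move3 (x @ [A, B] @ y @ [A, C] @ z @ [B, C] @ t, p) (x @ [B, A] @ y @ [C, A] @ z @ [C, B] @ t, p)"
  unfolding move3_def fst_conv snd_conv
  apply (rule conjI, rule refl)
  apply (rule exI[of _ x], rule exI[of _ y], rule exI[of _ z], rule exI[of _ t])
  apply (rule exI[of _ A], rule exI[of _ B], rule exI[of _ C])
  by simp

lemma isoI: "inj_on g (set w) \<Longrightarrow> map g w = w' \<Longrightarrow> (\<forall>x\<in>set w. q (g x) = p x) \<Longrightarrow> nw_iso (w, p) (w', q)"
  unfolding nw_iso_def by auto

lemma trivial_abab:
  assumes inv: "\<And>x. \<tau> (\<tau> x) = x"
  shows "homotopic \<tau> ([0,1,0,1], \<lambda>x. if x = 0 then c else \<tau> c) ([], r)"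
proof -
  define P where "P = (\<lambda>x::nat. if even x then c else \<tau> c)"
  have s0: "nw_step \<tau> ([0,1,0,1], \<lambda>x. if x = 0 then c else \<tau> c) ([2,3,2,3], P)"
  proof -
    have "nw_iso ([0,1,0,1], \<lambda>x. if x = 0 then c else \<tau> c) ([2,3,2,3], P)"
      by (rule isoI[of "\<lambda>x. x + 2"]) (auto simp: P_def inj_on_def)
    then show ?thesis unfolding nw_step_def is_nanoword_def by simp
  qed
  have s1: "nw_step \<tau> ([0,1,2,3,1,0,2,3], P) ([2,3,2,3], P)"
  proof -
    have "move2 \<tau> ([] @ [0, 1] @ [2,3] @ [1, 0] @ [2,3], P) ([] @ [2,3] @ [2,3], P)"
      by (rule move2I) (simp_all add: P_def)
    then show ?thesis unfolding nw_step_def is_nanoword_def by simp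
  qed
  have s2: "nw_step \<tau> ([0,4,5,1,2,3,1,0,2,3,5,4], P) ([0,1,2,3,1,0,2,3], P)"
  proof -
    have "move2 \<tau> ([0] @ [4, 5] @ [1,2,3,1,0,2,3] @ [5, 4] @ [], P) ([0] @ [1,2,3,1,0,2,3] @ [], P)"
      by (rule move2I) (simp_all add: P_def)
    then show ?thesis unfolding nw_step_def is_nanoword_def by simp
  qed
  have s3: "nw_step \<tau> ([0,4,1,5,2,1,3,0,2,5,3,4], P) ([0,4,5,1,2,3,1,0,2,3,5,4], P)"
  proof -
    have "move3 ([0,4] @ [1, 5] @ [2] @ [1, 3] @ [0,2] @ [5, 3] @ [4], P) ([0,4] @ [5, 1] @ [2] @ [3, 1] @ [0,2] @ [3, 5] @ [4], P)"
      by (rule move3I) (simp_all add: P_def)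
    then show ?thesis unfolding nw_step_def is_nanoword_def by simp
  qed
  have s4: "nw_step \<tau> ([0,4,1,5,2,1,3,0,2,5,3,4], P) ([0,4,1,1,3,0,3,4], P)"
  proof -
    have "move2 \<tau> ([0,4,1] @ [5, 2] @ [1,3,0] @ [2, 5] @ [3,4], P) ([0,4,1] @ [1,3,0] @ [3,4], P)"
      by (rule move2I) (simp_all add: P_def inv)
    then show ?thesis unfolding nw_step_def is_nanoword_def by simp
  qed
  have s5: "nw_step \<tau> ([0,4,1,1,3,0,3,4], P) ([0,4,3,0,3,4], P)"
  proof -
    have "move1 ([0,4] @ [1, 1] @ [3,0,3,4], P) ([0,4] @ [3,0,3,4], P)"
      by (rule move1I)
    then show ?thesis unfolding nw_step_def is_nanoword_def by simp
  qed
  have s6: "nw_step \<tau> ([0,4,3,0,3,4], P) ([0,0], P)"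
  proof -
    have "move2 \<tau> ([0] @ [4, 3] @ [0] @ [3, 4] @ [], P) ([0] @ [0] @ [], P)"
      by (rule move2I) (simp_all add: P_def)
    then show ?thesis unfolding nw_step_def is_nanoword_def by simp
  qed
  have s7: "nw_step \<tau> ([0,0], P) ([], P)"
  proof -
    have "move1 ([] @ [0, 0] @ [], P) ([] @ [], P)"
      by (rule move1I)
    then show ?thesis unfolding nw_step_def is_nanoword_def by simp
  qed
  have s8: "nw_step \<tau> ([], P) ([], r)"
    unfolding nw_step_def nw_iso_def is_nanoword_def by simp
  show ?thesis
    using hstep[OF s0] hstep'[OF s1] hstep'[OF s2] hstep'[OF s3] hstep[OF s4] hstep[OF s5]
      hstep[OF s6] hstep[OF s7] hstep[OF s8]
    by (meson homotopic_trans)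
qed


theorem corollary8p5:
  fixes \<tau> :: "'a \<Rightarrow> 'a" and a b :: 'a
  assumes "\<tau> \<circ> \<tau> = id"
  shows "(a = \<tau> b \<longrightarrow> homotopy_automorphisms \<tau> (w_ab a b) = {f. tau_equivariant_bij \<tau> f})
       \<and> (a \<noteq> \<tau> b \<longrightarrow> homotopy_automorphisms \<tau> (w_ab a b) =
            {f. tau_equivariant_bij \<tau> f \<and> f a = a \<and> f b = b})"
proof -
  have inv: "\<And>x. \<tau> (\<tau> x) = x" using assms by (metis comp_apply id_apply)
  have equiv: "\<And>f x. tau_equivariant_bij \<tau> f \<Longrightarrow> f (\<tau> x) = \<tau> (f x)"
    unfolding tau_equivariant_bij_def by (metis comp_apply)
  have pushw: "push_nw f (w_ab a b) = ([0,1,0,1], \<lambda>x. if x = 0 then f a else f b)" for f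
    by (auto simp: push_nw_def w_ab_def)
  have wa: "w_ab a b = ([0,1,0,1], \<lambda>x. if x = 0 then a else b)" by (simp add: w_ab_def)
  show ?thesis
  proof (intro conjI impI)
    assume ab: "a = \<tau> b"
    have b: "b = \<tau> a" using ab inv by simp
    show "homotopy_automorphisms \<tau> (w_ab a b) = {f. tau_equivariant_bij \<tau> f}"
    proof (intro set_eqI iffI)
      fix f assume "f \<in> homotopy_automorphisms \<tau> (w_ab a b)"
      then show "f \<in> {f. tau_equivariant_bij \<tau> f}" by (simp add: homotopy_automorphisms_def)
    next
      fix f assume "f \<in> {f. tau_equivariant_bij \<tau> f}"
      then have eq: "tau_equivariant_bij \<tau> f" by simp
      have p1: "push_nw f (w_ab a b) = ([0,1,0,1], \<lambda>x. if x = 0 then f a else \<tau> (f a))"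
      proof -
        have fb: "f b = \<tau> (f a)" using b equiv[OF eq, of a] by simp
        show ?thesis by (simp only: pushw fb)
      qed
      have w1: "w_ab a b = ([0,1,0,1], \<lambda>x. if x = 0 then a else \<tau> a)" using b by (simp add: w_ab_def)
      have h1: "homotopic \<tau> (push_nw f (w_ab a b)) ([], \<lambda>_. a)"
        unfolding p1 by (rule trivial_abab[OF inv])
      have h2: "homotopic \<tau> (w_ab a b) ([], \<lambda>_. a)"
        unfolding w1 by (rule trivial_abab[OF inv])
      have "homotopic \<tau> (push_nw f (w_ab a b)) (w_ab a b)"
        by (rule homotopic_trans[OF h1 homotopic_sym[OF h2]])
      then show "f \<in> homotopy_automorphisms \<tau> (w_ab a b)" using eq by (simp add: homotopy_automorphisms_def)
    qed
  next
    assume ab: "a \<noteq> \<tau> b"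
    have ab': "b \<noteq> \<tau> a" using ab inv by metis
    show "homotopy_automorphisms \<tau> (w_ab a b) = {f. tau_equivariant_bij \<tau> f \<and> f a = a \<and> f b = b}"
    proof (intro set_eqI iffI)
      fix f assume "f \<in> {f. tau_equivariant_bij \<tau> f \<and> f a = a \<and> f b = b}"
      then have eq: "tau_equivariant_bij \<tau> f" and fa: "f a = a" and fb: "f b = b" by auto
      have e: "(\<lambda>x::nat. if x = 0 then f a else f b) = (\<lambda>x. if x = 0 then a else b)"
        using fa fb by (intro ext) simp
      have "push_nw f (w_ab a b) = w_ab a b" unfolding pushw[of f] e by (simp add: w_ab_def)
      then have "homotopic \<tau> (push_nw f (w_ab a b)) (w_ab a b)" unfolding homotopic_def by simp
      then show "f \<in> homotopy_automorphisms \<tau> (w_ab a b)" using eq by (simp add: homotopy_automorphisms_def)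
    next
      fix f assume "f \<in> homotopy_automorphisms \<tau> (w_ab a b)"
      then have eq: "tau_equivariant_bij \<tau> f" and h: "homotopic \<tau> (push_nw f (w_ab a b)) (w_ab a b)"
        by (auto simp: homotopy_automorphisms_def)
      define c where "c = f a"
      define d where "d = f b"
      have pw: "push_nw f (w_ab a b) = ([0,1,0,1], \<lambda>x. if x = 0 then c else d)"
        unfolding c_def d_def by (rule pushw)
      have injf: "inj f" using eq unfolding tau_equivariant_bij_def bij_def by blast
      have fc: "(\<tau> c = c) = (\<tau> a = a)"
      proof -
        have "\<tau> c = f (\<tau> a)" unfolding c_def using equiv[OF eq, of a] by simp
        then show ?thesis unfolding c_def using inj_eq[OF injf, of "\<tau> a" a] by simp
      qed
      have I: "Inv \<tau> Q t ([0,1,0,1], \<lambda>x. if x = 0 then c else d) = Inv \<tau> Q t ([0,1,0,1], \<lambda>x. if x = 0 then a else b)"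
        if "goodQ \<tau> t Q" for t Q
        using homotopic_Inv[OF inv that h] pw wa by simp
      define Q1 where "Q1 = (\<lambda>m L (K :: 'a \<Rightarrow> int). clseq \<tau> L (del m))"
      have N1: "NN (Q1 m) [0,1,0,1] (\<lambda>x. if x = 0 then q0 else q1) s
          = (if q0 = s \<and> q1 = m then 1 else 0) + (if q1 = s \<and> m = \<tau> q0 then 1 else 0)" for m q0 q1 s
        unfolding NN_abab Q1_def by (simp add: clseq_dd[OF inv] clseq_negd[OF inv])
      have G1: "goodQ \<tau> t (Q1 m)" for t m unfolding Q1_def by (rule good1[OF inv])
      have nn: "NN Q w p s \<ge> 0" for Q w p s unfolding NN_def by (rule sum_nonneg) simp
      note T1 = I[OF G1[of a b]]
      have wv: "NN (Q1 b) [0,1,0,1] (\<lambda>x. if x = 0 then a else b) a = 1"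
        unfolding N1 using ab' by simp
      have wv2: "NN (Q1 b) [0,1,0,1] (\<lambda>x. if x = 0 then a else b) (\<tau> a) = (if a = \<tau> a then 1 else 0)"
        unfolding N1 using ab' by simp
      have nz: "NN (Q1 b) [0,1,0,1] (\<lambda>x. if x = 0 then c else d) a \<noteq> 0"
      proof (cases "\<tau> a = a")
        case True
        then show ?thesis using T1 wv unfolding Inv_def fst_conv snd_conv by auto
      next
        case False
        then have "a \<noteq> \<tau> a" by metis
        then show ?thesis using T1 wv wv2 False nn[of "Q1 b" "[0,1,0,1]" "\<lambda>x. if x = 0 then c else d" "\<tau> a"]
          unfolding Inv_def fst_conv snd_conv by auto
      qed
      have D: "(c = a \<and> d = b) \<or> (d = a \<and> b = \<tau> c)"
        using nz unfolding N1 by (auto split: if_splits)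
      show "f \<in> {f. tau_equivariant_bij \<tau> f \<and> f a = a \<and> f b = b}"
      proof (cases "c = a \<and> d = b")
        case True
        then show ?thesis using eq c_def d_def by simp
      next
        case False
        with D have da: "d = a" and bc: "b = \<tau> c" by auto
        have cb: "c = \<tau> b" using bc inv by metis
        show ?thesis
        proof (cases "\<tau> a = a")
          case False
          note T2 = I[OF G1[of b "\<tau> a"]]
          have f1: "\<tau> b \<noteq> b" using False fc cb inv by metis
          have f2: "b \<noteq> \<tau> b" "a \<noteq> \<tau> a" "\<tau> a \<noteq> a" "\<tau> b \<noteq> a" "b \<noteq> \<tau> a" "\<tau> a \<noteq> b" using f1 False ab ab' by metis+
          have "Inv \<tau> (Q1 (\<tau> a)) b ([0,1,0,1], \<lambda>x. if x = 0 then a else b) = 1"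
            unfolding Inv_def fst_conv snd_conv N1 using f1 f2 by simp
          moreover have "Inv \<tau> (Q1 (\<tau> a)) b ([0,1,0,1], \<lambda>x. if x = 0 then c else d) = 0"
            unfolding Inv_def fst_conv snd_conv N1 da cb using f1 f2 inv by simp
          ultimately show ?thesis using T2 by simp
        next
          case True
          then have tc: "\<tau> c = c" using fc by simp
          then have bc2: "b = c" using bc by simp
          have tb: "\<tau> b = b" using tc bc2 by simp
          show ?thesis
          proof (cases "a = b")
            case True
            then show ?thesis using False da bc2 by simp
          next
            case nab: False
            note T3 = I[OF good3[OF inv tb nab]]
            have N3: "NN (\<lambda>L K. odd (K b)) [0,1,0,1] (\<lambda>x. if x = 0 then q0 else q1) s
                = (if q0 = s \<and> q1 = b then 1 else 0)" for q0 q1 s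
              unfolding NN_abab by (simp add: del_def)
            have "Inv \<tau> (\<lambda>L K. odd (K b)) a ([0,1,0,1], \<lambda>x. if x = 0 then a else b) = 1"
              unfolding Inv_def fst_conv snd_conv N3 using True by simp
            moreover have "Inv \<tau> (\<lambda>L K. odd (K b)) a ([0,1,0,1], \<lambda>x. if x = 0 then c else d) = 0"
              unfolding Inv_def fst_conv snd_conv N3 da bc2[symmetric] using True nab by simp
            ultimately show ?thesis using T3 by simp
          qed
        qed
      qed
    qed
  qed
qed

end
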